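(* Let $(N_0,c,w,P)$ be an RS-situation and $(N_0,v)$ the corresponding RS-game. Then $(N_0,v)$ is balanced, i.e. $Core(N_0,v)\neq\emptyset$.
   Context: Let $c\in\mathbb{R}$. An RS-problem is a triple $(c,w,p)$ where $w:\mathbb{R}_+\to(c,+\infty)$ is decreasing (non-increasing) and continuous, and $p:\mathbb{R}_+\to\mathbb{R}$ is decreasing (non-increasing) and continuous, satisfies $p(0)>w(0)$, and there exists $q>0$ with $p(q)=c$. An RS-situation is a tuple $(N_0,c,w,P)$ where $N=\{1,\dots,n\}$ is the set of retailers, $0$ denotes the supplier, $N_0=N\cup\{0\}$, $P=(p_1,\dots,p_n)$, and $(c,w,p_i)$ is an RS-problem for each $i\in N$. For $S\subseteq N$ write $S_0=S\cup\{0\}$. For $q\ge0$ and $\omega\in\mathbb{R}$, $\Pi_i^{ret}(q;\omega)=(p_i(q)-\omega)q$. For nonempty $S\subseteq N$, $(q_i^S)_{i\in S}$ is a fixed optimal solution of: maximize $\sum_{i\in S}(p_i(q_i)-w(q_S))q_i$ over $q\in\mathbb{R}_+^{S}$ subject to $p_i(q_i)\ge w(q_S)$ for all $i\in S$, where $q_S=\sum_{i\in S}q_i$; $q_S^S=\sum_{i\in S}q_i^S$. For $i\in N$, $q_i^c$ is a fixed optimal solution of: maximize $(p_i(q)-c)q$ over $q\ge0$ subject to $p_i(q)\ge c$. The corresponding RS-game $(N_0,v)$ is the TU game on $N_0$ with $v(\emptyset)=0$ and, for all $S\subseteq N$, $v(S)=\sum_{i\in S}\Pi_i^{ret}(q_i^S;w(q_S^S))$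 and $v(S_0)=\sum_{i\in S}\Pi_i^{ret}(q_i^c;c)$. The core is $Core(N_0,v)=\{x\in\mathbb{R}^{N_0}: \sum_{i\in N_0}x_i=v(N_0),\ \sum_{i\in T}x_i\ge v(T)\text{ for all }T\subset N_0\}$; a game is balanced iff its core is nonempty. *)

theory Defs
  imports "HOL-Analysis.Analysis"
begin

(* Players: retailers N = {1..n} and supplier 0, so N0 = {0..n}. *)

definition rs_problem :: "real \<Rightarrow> (real \<Rightarrow> real) \<Rightarrow> (real \<Rightarrow> real) \<Rightarrow> bool" where
  "rs_problem c w p \<longleftrightarrow>
     (\<forall>x\<ge>0. w x > c) \<and> continuous_on {0..} w \<and> (\<forall>x y. 0 \<le> x \<longrightarrow> x \<le> y \<longrightarrow> w y \<le> w x) \<and>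
     continuous_on {0..} p \<and> (\<forall>x y. 0 \<le> x \<longrightarrow> x \<le> y \<longrightarrow> p y \<le> p x) \<and>
     p 0 > w 0 \<and> (\<exists>q>0. p q = c)"

definition rs_situation :: "nat \<Rightarrow> real \<Rightarrow> (real \<Rightarrow> real) \<Rightarrow> (nat \<Rightarrow> real \<Rightarrow> real) \<Rightarrow> bool" where
  "rs_situation n c w P \<longleftrightarrow> (\<forall>i\<in>{1..n}. rs_problem c w (P i))"

definition retailer_profit :: "(real \<Rightarrow> real) \<Rightarrow> real \<Rightarrow> real \<Rightarrow> real" where
  "retailer_profit p q \<omega> = (p q - \<omega>) * q"

definition coal_feasible :: "(real \<Rightarrow> real) \<Rightarrow> (nat \<Rightarrow> real \<Rightarrow> real) \<Rightarrow> nat set \<Rightarrow> (nat \<Rightarrow> real) \<Rightarrow> bool" where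
  "coal_feasible w P S q \<longleftrightarrow> (\<forall>i\<in>S. q i \<ge> 0 \<and> P i (q i) \<ge> w (sum q S))"

definition coal_objective :: "(real \<Rightarrow> real) \<Rightarrow> (nat \<Rightarrow> real \<Rightarrow> real) \<Rightarrow> nat set \<Rightarrow> (nat \<Rightarrow> real) \<Rightarrow> real" where
  "coal_objective w P S q = (\<Sum>i\<in>S. (P i (q i) - w (sum q S)) * q i)"

definition coal_optimal :: "(real \<Rightarrow> real) \<Rightarrow> (nat \<Rightarrow> real \<Rightarrow> real) \<Rightarrow> nat set \<Rightarrow> (nat \<Rightarrow> real) \<Rightarrow> bool" where
  "coal_optimal w P S q \<longleftrightarrow> coal_feasible w P S q \<and>
     (\<forall>q'. coal_feasible w P S q' \<longrightarrow> coal_objective w P S q' \<le> coal_objective w P S q)"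

definition coop_optimal :: "real \<Rightarrow> (real \<Rightarrow> real) \<Rightarrow> real \<Rightarrow> bool" where
  "coop_optimal c p q \<longleftrightarrow> q \<ge> 0 \<and> p q \<ge> c \<and>
     (\<forall>q'. q' \<ge> 0 \<longrightarrow> p q' \<ge> c \<longrightarrow> (p q' - c) * q' \<le> (p q - c) * q)"

(* The RS-game; qS S is the fixed optimal solution for coalition S, qc i the one for retailer i. *)
definition rs_game :: "real \<Rightarrow> (real \<Rightarrow> real) \<Rightarrow> (nat \<Rightarrow> real \<Rightarrow> real)
     \<Rightarrow> (nat set \<Rightarrow> nat \<Rightarrow> real) \<Rightarrow> (nat \<Rightarrow> real) \<Rightarrow> nat set \<Rightarrow> real" where
  "rs_game c w P qS qc T =
     (if 0 \<in> T then (\<Sum>i\<in>T - {0}. retailer_profit (P i) (qc i) c)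
      else (\<Sum>i\<in>T. retailer_profit (P i) (qS T i) (w (sum (qS T) T))))"

definition core :: "nat set \<Rightarrow> (nat set \<Rightarrow> real) \<Rightarrow> (nat \<Rightarrow> real) set" where
  "core Nz v = {x. sum x Nz = v Nz \<and> (\<forall>T. T \<subset> Nz \<longrightarrow> sum x T \<ge> v T)}"

end

theory Submission
  imports Defs
begin

theorem theorem5p2:
  fixes n :: nat and c :: real and w :: "real \<Rightarrow> real" and P :: "nat \<Rightarrow> real \<Rightarrow> real"
    and qS :: "nat set \<Rightarrow> nat \<Rightarrow> real" and qc :: "nat \<Rightarrow> real"
  assumes "rs_situation n c w P"
    and "\<And>S. S \<subseteq> {1..n} \<Longrightarrow> S \<noteq> {} \<Longrightarrow> coal_optimal w P S (qS S)"
    and "\<And>i. i \<in> {1..n} \<Longrightarrow> coop_optimal c (P i) (qc i)"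
  shows "core {0..n} (rs_game c w P qS qc) \<noteq> {}"
proof -
  define x where "x i = (if i = 0 then 0 else retailer_profit (P i) (qc i) c)" for i
  have xT: "sum x T = sum x (T - {0})" for T :: "nat set"
  proof (cases "0 \<in> T")
    case True
    then have "T = insert 0 (T - {0})" by blast
    then have "sum x T = sum x (insert 0 (T - {0}))" by simp
    also have "\<dots> = x 0 + sum x (T - {0})"
      by (cases "finite T") (simp_all add: sum.insert_remove x_def)
    finally show ?thesis by (simp add: x_def)
  qed simp
  have xeq: "sum x (T - {0}) = (\<Sum>i\<in>T - {0}. retailer_profit (P i) (qc i) c)" for T
    by (rule sum.cong) (auto simp: x_def)
  have main: "sum x T \<ge> rs_game c w P qS qc T" if T: "T \<subseteq> {0..n}" for T
  proof (cases "0 \<in> T")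
    case True
    then show ?thesis using xT xeq by (simp add: rs_game_def)
  next
    case False
    show ?thesis
    proof (cases "T = {}")
      case True then show ?thesis by (simp add: rs_game_def)
    next
      case ne: False
      have TS: "T \<subseteq> {1..n}" proof
        fix i assume "i \<in> T"
        then show "i \<in> {1..n}" using T False by (cases i) auto
      qed
      then have opt: "coal_optimal w P T (qS T)" using assms(2) ne by blast
      then have feas: "\<And>i. i \<in> T \<Longrightarrow> qS T i \<ge> 0 \<and> P i (qS T i) \<ge> w (sum (qS T) T)"
        by (auto simp: coal_optimal_def coal_feasible_def)
      have s0: "sum (qS T) T \<ge> 0" using feas by (simp add: sum_nonneg)
      have rp: "rs_problem c w (P i)" if "i \<in> T" for i
        using assms(1) TS that by (auto simp: rs_situation_def)
      have wc: "w (sum (qS T) T) > c"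
        using rp ne s0 by (auto simp: rs_problem_def)
      have "rs_game c w P qS qc T = (\<Sum>i\<in>T. retailer_profit (P i) (qS T i) (w (sum (qS T) T)))"
        using False by (simp add: rs_game_def)
      also have "\<dots> \<le> (\<Sum>i\<in>T. x i)"
      proof (rule sum_mono)
        fix i assume i: "i \<in> T"
        have co: "coop_optimal c (P i) (qc i)" using assms(3) TS i by blast
        have f: "qS T i \<ge> 0" "P i (qS T i) \<ge> w (sum (qS T) T)" using feas i by auto
        have "(P i (qS T i) - w (sum (qS T) T)) * qS T i \<le> (P i (qS T i) - c) * qS T i"
          using f wc by (intro mult_right_mono) auto
        also have "\<dots> \<le> (P i (qc i) - c) * qc i"
          using co f wc unfolding coop_optimal_def by auto
        finally show "retailer_profit (P i) (qS T i) (w (sum (qS T) T)) \<le> x i"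
          using i False by (auto simp: x_def retailer_profit_def)
      qed
      finally show ?thesis .
    qed
  qed
  have "x \<in> core {0..n} (rs_game c w P qS qc)"
    unfolding core_def
  proof (intro CollectI conjI allI impI)
    show "sum x {0..n} = rs_game c w P qS qc {0..n}"
      using xT xeq by (simp add: rs_game_def)
    fix T assume "T \<subset> {0..n}"
    then show "rs_game c w P qS qc T \<le> sum x T" using main by blast
  qed
  then show ?thesis by blast
qed

end
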